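(* For $1\le i\le n$, \[ \mathcal{S}_{0,i}:=\partial_{\vartheta_0}\bigl(x_1^{n-1}x_2^{n-2}\cdots x_{n-1}\,\omega_i\bigr) = \sum_{\ell = i}^{n} (-1)^{\ell+i}\, h_{\ell-i}(x_\ell,\dots,x_n)\,\omega_\ell , \] where $h_j(x_\ell,\dots,x_n)$ is the $j$-th complete homogeneous symmetric polynomial in $x_\ell,\dots,x_n$.
   Context: $R=\mathbb{Z}[x_1,\dots,x_n]\otimes\bigwedge^\bullet(\omega_1,\dots,\omega_n)$ is supercommutative with $x_i$ even and $\omega_i$ odd. $S_n$ acts on $R$ by ring automorphisms with $s_i(x_j)=x_{s_i(j)}$ and $s_i(\omega_j)=\omega_j+\delta_{ij}(x_i-x_{i+1})\omega_{i+1}$. The Demazure operators are $\partial_i(f)=(f-s_i(f))/(x_i-x_{i+1})$, and for $\vartheta\in S_n$ with reduced expression $s_{i_1}\cdots s_{i_r}$, $\partial_\vartheta=\partial_{i_1}\cdots\partial_{i_r}$ (independent of the reduced expression). $\vartheta_0$ is the longest element of $S_n$. *)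

theory Defs
  imports "HOL-Library.Poly_Mapping" "HOL-Combinatorics.Transposition"
begin

text \<open>Polynomials in Z[x_1, x_2, ...]: finitely supported maps from monomials
  (exponent vectors nat =>0 nat) to integer coefficients.\<close>
type_synonym mpoly = "(nat \<Rightarrow>\<^sub>0 nat) \<Rightarrow>\<^sub>0 int"

definition var :: "nat \<Rightarrow> mpoly" where
  "var i = Poly_Mapping.single (Poly_Mapping.single i 1) 1"

definition swap_poly :: "nat \<Rightarrow> mpoly \<Rightarrow> mpoly" where
  "swap_poly i p = Poly_Mapping.map_key (\<lambda>m. Poly_Mapping.map_key (transpose i (Suc i)) m) p"

text \<open>Elements of R = Z[x] (x) Lambda(omega_1..omega_n), as a Z[x]-module:
  f T is the coefficient of omega_T = omega_{t1} ^ ... ^ omega_{tk} (t1 < ... < tk, T = {t1..tk}).\<close>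
type_synonym relt = "nat set \<Rightarrow> mpoly"

definition omega_times :: "mpoly \<Rightarrow> nat \<Rightarrow> relt" where
  "omega_times p j = (\<lambda>T. if T = {j} then p else 0)"

text \<open>The ring automorphism s_i of R (x_j |-> x_{s_i(j)},
  omega_j |-> omega_j + delta_{ij}(x_i - x_{i+1}) omega_{i+1}), written out on the basis
  omega_T: s_i(p omega_T) = s_i(p) omega_T + [i in T, i+1 notin T] s_i(p)(x_i - x_{i+1}) omega_{T-{i} u {i+1}}.\<close>
definition s_act :: "nat \<Rightarrow> relt \<Rightarrow> relt" where
  "s_act i f = (\<lambda>T. swap_poly i (f T) +
      (if Suc i \<in> T \<and> i \<notin> T
       then (var i - var (Suc i)) * swap_poly i (f (insert i (T - {Suc i}))) else 0))"

definition demazure :: "nat \<Rightarrow> relt \<Rightarrow> relt" where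
  "demazure i f = (THE g. \<forall>T. (var i - var (Suc i)) * g T = f T - s_act i f T)"

text \<open>Permutations of {1..n} as functions nat => nat; word products of simple transpositions.\<close>
definition word_prod :: "nat list \<Rightarrow> nat \<Rightarrow> nat" where
  "word_prod w = foldr (\<lambda>i p. transpose i (Suc i) \<circ> p) w id"

definition reduced_word :: "nat \<Rightarrow> (nat \<Rightarrow> nat) \<Rightarrow> nat list \<Rightarrow> bool" where
  "reduced_word n \<sigma> w \<longleftrightarrow> set w \<subseteq> {1..<n} \<and> word_prod w = \<sigma> \<and>
     (\<forall>w'. set w' \<subseteq> {1..<n} \<and> word_prod w' = \<sigma> \<longrightarrow> length w \<le> length w')"

definition demazure_perm :: "nat \<Rightarrow> (nat \<Rightarrow> nat) \<Rightarrow> relt \<Rightarrow> relt" where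
  "demazure_perm n \<sigma> f = foldr demazure (SOME w. reduced_word n \<sigma> w) f"

definition longest :: "nat \<Rightarrow> nat \<Rightarrow> nat" where
  "longest n = (\<lambda>j. if 1 \<le> j \<and> j \<le> n then n + 1 - j else j)"

definition complete_h :: "nat \<Rightarrow> nat set \<Rightarrow> mpoly" where
  "complete_h d A = (\<Sum>m \<in> {m. Poly_Mapping.keys m \<subseteq> A \<and> (\<Sum>k\<in>A. Poly_Mapping.lookup m k) = d}.
      Poly_Mapping.single m 1)"

definition staircase :: "nat \<Rightarrow> mpoly" where
  "staircase n = (\<Prod>k=1..n. var k ^ (n - k))"

end

theory Submission
  imports Defs "HOL-Library.FuncSet"
begin

abbreviation tr :: "nat \<Rightarrow> nat \<Rightarrow> nat" where "tr k \<equiv> transpose k (Suc k)"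

definition mk :: "nat \<Rightarrow> (nat \<Rightarrow>\<^sub>0 nat) \<Rightarrow> (nat \<Rightarrow>\<^sub>0 nat)" where
  "mk k m = Poly_Mapping.map_key (tr k) m"

lemma lookup_mk: "Poly_Mapping.lookup (mk k m) j = Poly_Mapping.lookup m (tr k j)"
  unfolding mk_def by (simp add: map_key.rep_eq inj_transpose)

lemma mk_mk [simp]: "mk k (mk k m) = m"
  by (rule poly_mapping_eqI) (simp add: lookup_mk)

lemma inj_mk: "inj (mk k)"
  by (metis injI mk_mk)

lemma mk_add: "mk k (a + b) = mk k a + mk k b"
  unfolding mk_def by (simp add: map_key_plus inj_transpose)

lemma mk_single: "mk k (Poly_Mapping.single j e) = Poly_Mapping.single (tr k j) e"
  by (rule poly_mapping_eqI) (simp add: lookup_mk lookup_single when_def transpose_eq_iff, auto)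

lemma keys_mk: "Poly_Mapping.keys (mk k m) = tr k ` Poly_Mapping.keys m"
proof (rule set_eqI)
  fix x show "x \<in> Poly_Mapping.keys (mk k m) \<longleftrightarrow> x \<in> tr k ` Poly_Mapping.keys m"
    by (auto simp: in_keys_iff lookup_mk image_iff intro!: bexI[of _ "tr k x"])
qed

abbreviation sg :: "nat \<Rightarrow> mpoly \<Rightarrow> mpoly" where "sg \<equiv> swap_poly"

lemma swap_poly_alt: "swap_poly k p = Poly_Mapping.map_key (mk k) p"
  unfolding swap_poly_def mk_def ..

lemma sg_single: "sg k (Poly_Mapping.single m c) = Poly_Mapping.single (mk k m) c"
proof -
  have "Poly_Mapping.single m c = Poly_Mapping.single (mk k (mk k m)) c" by simp
  then show ?thesis unfolding swap_poly_alt using map_key_single[OF inj_mk] by metis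
qed

lemma lookup_sg: "Poly_Mapping.lookup (sg k p) m = Poly_Mapping.lookup p (mk k m)"
  unfolding swap_poly_alt by (simp add: map_key.rep_eq inj_mk)

lemma sg_sg [simp]: "sg k (sg k p) = p"
  by (rule poly_mapping_eqI) (simp add: lookup_sg)

lemma sg_add: "sg k (p + q) = sg k p + sg k q"
  by (rule poly_mapping_eqI) (simp add: lookup_sg lookup_add)

lemma sg_zero [simp]: "sg k 0 = 0"
  by (rule poly_mapping_eqI) (simp add: lookup_sg)

lemma sg_minus: "sg k (- p) = - sg k p"
  by (rule poly_mapping_eqI) (simp add: lookup_sg)

lemma sg_diff: "sg k (p - q) = sg k p - sg k q"
  by (rule poly_mapping_eqI) (simp add: lookup_sg lookup_minus)

lemma sg_mult_single: "sg k (Poly_Mapping.single a c * Poly_Mapping.single b d) =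
   sg k (Poly_Mapping.single a c) * sg k (Poly_Mapping.single b d)"
  by (simp add: mult_single sg_single mk_add)

lemma sg_mult: "sg k (p * q) = sg k p * sg k q"
proof -
  have H: "sg k (p * frag_of b) = sg k p * sg k (frag_of b)" for b
    using subset_UNIV
  proof (induction p rule: frag_induction)
    case zero then show ?case by simp
  next
    case (one x) show ?case by (rule sg_mult_single)
  next
    case (diff a c) then show ?case by (simp add: left_diff_distrib sg_diff)
  qed
  show ?thesis
    using subset_UNIV
  proof (induction q rule: frag_induction)
    case zero then show ?case by simp
  next
    case (one x) show ?case by (rule H)
  next
    case (diff a c) then show ?case by (simp add: right_diff_distrib sg_diff)
  qed
qed

lemma sg_one [simp]: "sg k 1 = 1"
  by (metis single_one sg_single mk_def map_key_zero inj_transpose)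

lemma sg_var: "sg k (var j) = var (tr k j)"
  unfolding var_def by (simp add: sg_single mk_single)

lemma sg_pow: "sg k (p ^ e) = sg k p ^ e"
  by (induction e) (simp_all add: sg_mult)

lemma sg_sum: "sg k (sum f A) = (\<Sum>a\<in>A. sg k (f a))"
  by (induction A rule: infinite_finite_induct) (simp_all add: sg_add)

lemma sg_prod: "sg k (prod f A) = (\<Prod>a\<in>A. sg k (f a))"
  by (induction A rule: infinite_finite_induct) (simp_all add: sg_mult)

lemma sg_neg1_pow: "sg k ((-1) ^ e * p) = (-1) ^ e * sg k p"
  by (simp add: sg_mult sg_pow sg_minus)



definition rt :: "nat \<Rightarrow> mpoly" where "rt k = var k - var (Suc k)"

lemma var_inj: "var a = var b \<Longrightarrow> a = b"
  unfolding var_def by (metis frag_of_eq lookup_single_eq lookup_single_not_eq one_neq_zero)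

lemma var_diff_nz: "a \<noteq> b \<Longrightarrow> var a - var b \<noteq> 0"
  using var_inj by auto

lemma rt_nz: "rt k \<noteq> 0"
  unfolding rt_def by (rule var_diff_nz) simp

definition dvok :: "nat \<Rightarrow> mpoly \<Rightarrow> bool" where
  "dvok k p \<longleftrightarrow> (\<exists>q. rt k * q = p - sg k p)"

lemma dvok_diff: "dvok k p \<Longrightarrow> dvok k q \<Longrightarrow> dvok k (p - q)"
  unfolding dvok_def by (metis (no_types, opaque_lifting) right_diff_distrib sg_diff diff_diff_eq diff_add_eq add_diff_eq diff_diff_eq2)

lemma dvok_zero: "dvok k 0"
  unfolding dvok_def by (rule exI[of _ 0]) simp

lemma dvok_mult: "dvok k p \<Longrightarrow> dvok k q \<Longrightarrow> dvok k (p * q)"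
  unfolding dvok_def
proof (elim exE)
  fix a b assume a: "rt k * a = p - sg k p" and b: "rt k * b = q - sg k q"
  have "rt k * (a * q + sg k p * b) = (rt k * a) * q + sg k p * (rt k * b)"
    by (simp add: algebra_simps)
  also have "\<dots> = (p - sg k p) * q + sg k p * (q - sg k q)" by (simp only: a b)
  also have "\<dots> = p * q - sg k (p * q)" by (simp add: sg_mult algebra_simps)
  finally have "rt k * (a * q + sg k p * b) = p * q - sg k (p * q)" .
  then show "\<exists>c. rt k * c = p * q - sg k (p * q)" by blast
qed

lemma dvok_one: "dvok k 1"
  unfolding dvok_def by (rule exI[of _ 0]) simp

lemma dvok_pow: "dvok k p \<Longrightarrow> dvok k (p ^ e)"
  by (induction e) (simp_all add: dvok_one dvok_mult)

lemma dvok_var: "dvok k (var j)"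
proof -
  consider "j = k" | "j = Suc k" | "j \<noteq> k \<and> j \<noteq> Suc k" by blast
  then show ?thesis
  proof cases
    case 1 then show ?thesis unfolding dvok_def by (intro exI[of _ 1]) (simp add: sg_var rt_def)
  next
    case 2 then show ?thesis unfolding dvok_def by (intro exI[of _ "-1"]) (simp add: sg_var rt_def)
  next
    case 3 then show ?thesis unfolding dvok_def by (intro exI[of _ 0]) (simp add: sg_var)
  qed
qed

lemma frag_single_pow: "frag_of (Poly_Mapping.single a b) = var a ^ b"
proof (induction b)
  case 0 then show ?case by simp
next
  case (Suc b)
  have "Poly_Mapping.single a (Suc b) = Poly_Mapping.single a 1 + Poly_Mapping.single a b"
    by (simp add: single_add[symmetric])
  have "var a ^ Suc b = frag_of (Poly_Mapping.single a 1) * frag_of (Poly_Mapping.single a b)"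
    using Suc by (simp add: var_def)
  also have "\<dots> = frag_of (Poly_Mapping.single a 1 + Poly_Mapping.single a b)"
    by (simp only: mult_single) simp
  finally show ?case using \<open>Poly_Mapping.single a (Suc b) = _\<close> by simp
qed

lemma dvok_monom: "dvok k (frag_of m)"
proof (induction m rule: update_induct)
  case const then show ?case by (simp add: dvok_one)
next
  case (update f a b)
  have "Poly_Mapping.update a b f = f + Poly_Mapping.single a b"
    using update.hyps(1)
    by (intro poly_mapping_eqI) (auto simp: lookup_update lookup_add lookup_single in_keys_iff when_def)
  then have "frag_of (Poly_Mapping.update a b f) = frag_of f * var a ^ b"
    by (simp add: mult_single frag_single_pow[symmetric])
  then show ?case using update.IH dvok_mult dvok_pow dvok_var by metis
qed

lemma dvok_all: "dvok k p"
  using subset_UNIV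
  by (induction p rule: frag_induction) (simp_all add: dvok_zero dvok_monom dvok_diff)

definition Dl :: "nat \<Rightarrow> mpoly \<Rightarrow> mpoly" where
  "Dl k p = (SOME q. rt k * q = p - sg k p)"

lemma Dl: "rt k * Dl k p = p - sg k p"
  unfolding Dl_def using dvok_all[of k p] unfolding dvok_def by (rule someI_ex)

lemma Dl_unique: "rt k * q = p - sg k p \<Longrightarrow> Dl k p = q"
  using Dl[of k p] rt_nz[of k] by (metis mult_left_cancel)

lemma cancel_rt: "rt k * a = rt k * b \<Longrightarrow> a = b"
  using rt_nz[of k] by simp

lemma sg_rt_self: "sg k (rt k) = - rt k"
  by (simp add: rt_def sg_diff sg_var)

lemma Dl_add: "Dl k (p + q) = Dl k p + Dl k q"
  by (rule Dl_unique) (simp add: distrib_left Dl sg_add)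

lemma Dl_diff: "Dl k (p - q) = Dl k p - Dl k q"
  by (rule Dl_unique) (simp add: right_diff_distrib Dl sg_diff)

lemma Dl_minus: "Dl k (- p) = - Dl k p"
  by (rule Dl_unique) (simp add: Dl sg_minus)

lemma Dl_zero [simp]: "Dl k 0 = 0"
  by (rule Dl_unique) simp

lemma Dl_mult: "Dl k (p * q) = Dl k p * q + sg k p * Dl k q"
proof (rule Dl_unique)
  have "rt k * (Dl k p * q + sg k p * Dl k q) = (rt k * Dl k p) * q + sg k p * (rt k * Dl k q)"
    by (simp add: algebra_simps)
  also have "\<dots> = (p - sg k p) * q + sg k p * (q - sg k q)" by (simp only: Dl)
  also have "\<dots> = p * q - sg k (p * q)" by (simp add: sg_mult algebra_simps)
  finally show "rt k * (Dl k p * q + sg k p * Dl k q) = p * q - sg k (p * q)" .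
qed

lemma Dl_sg: "Dl k (sg k p) = - Dl k p"
  by (rule Dl_unique) (simp add: Dl)

lemma sg_Dl: "sg k (Dl k p) = Dl k p"
proof -
  have "sg k (rt k * Dl k p) = sg k p - p" by (simp add: Dl sg_diff)
  then have "- (rt k * sg k (Dl k p)) = sg k p - p" by (simp add: sg_mult sg_rt_self)
  then have "rt k * sg k (Dl k p) = p - sg k p" by (metis minus_diff_eq minus_minus)
  then have "rt k * sg k (Dl k p) = rt k * Dl k p" by (simp only: Dl)
  then show ?thesis by (rule cancel_rt)
qed

lemma Dl_sym: "sg k p = p \<Longrightarrow> Dl k p = 0"
  by (rule Dl_unique) simp

lemma Dl_mult_sym: "sg k c = c \<Longrightarrow> Dl k (c * p) = c * Dl k p"
  by (simp add: Dl_mult Dl_sym)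

lemma Dl_sgn: "Dl k ((-1) ^ e * p) = (-1) ^ e * Dl k p"
  by (rule Dl_mult_sym) (simp add: sg_pow sg_minus)



lemma lookup_sg_sg: "Poly_Mapping.lookup (sg i (sg j p)) m = Poly_Mapping.lookup p (mk j (mk i m))"
  by (simp add: lookup_sg)

lemma tr_comm: "Suc i < j \<or> Suc j < i \<Longrightarrow> tr i (tr j x) = tr j (tr i x)"
  by (auto simp: transpose_def)

lemma sg_comm: assumes "Suc i < j \<or> Suc j < i" shows "sg i (sg j p) = sg j (sg i p)"
proof (rule poly_mapping_eqI)
  fix m
  have "mk j (mk i m) = mk i (mk j m)"
    by (rule poly_mapping_eqI) (simp add: lookup_mk tr_comm[OF assms])
  then show "Poly_Mapping.lookup (sg i (sg j p)) m = Poly_Mapping.lookup (sg j (sg i p)) m"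
    by (simp add: lookup_sg)
qed

lemma tr_braid: "tr i (tr (Suc i) (tr i x)) = tr (Suc i) (tr i (tr (Suc i) x))"
  by (auto simp: transpose_def)

lemma sg_braid: "sg i (sg (Suc i) (sg i p)) = sg (Suc i) (sg i (sg (Suc i) p))"
proof (rule poly_mapping_eqI)
  fix m
  have "mk i (mk (Suc i) (mk i m)) = mk (Suc i) (mk i (mk (Suc i) m))"
    by (rule poly_mapping_eqI) (simp add: lookup_mk tr_braid)
  then show "Poly_Mapping.lookup (sg i (sg (Suc i) (sg i p))) m =
      Poly_Mapping.lookup (sg (Suc i) (sg i (sg (Suc i) p))) m"
    by (simp add: lookup_sg)
qed

lemma sg_rt_other: "Suc i < j \<or> Suc j < i \<Longrightarrow> sg i (rt j) = rt j"
  by (auto simp: rt_def sg_diff sg_var transpose_def)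

lemma Dl_sg_comm: assumes "Suc i < j \<or> Suc j < i" shows "Dl i (sg j p) = sg j (Dl i p)"
proof (rule Dl_unique)
  have a: "Suc j < i \<or> Suc i < j" using assms by auto
  have "rt i * sg j (Dl i p) = sg j (rt i * Dl i p)"
    using sg_rt_other[OF a] by (simp add: sg_mult)
  also have "\<dots> = sg j p - sg i (sg j p)" using sg_comm[OF assms, of p] by (simp add: Dl sg_diff)
  finally show "rt i * sg j (Dl i p) = sg j p - sg i (sg j p)" .
qed

lemma Dl_comm_aux: assumes "Suc i < j \<or> Suc j < i"
  shows "rt i * (rt j * Dl i (Dl j p)) = (p - sg j p) - sg i (p - sg j p)"
proof -
  let ?Y = "Dl j p"
  have "rt i * (rt j * Dl i ?Y) = rt j * (rt i * Dl i ?Y)" by (simp add: algebra_simps)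
  also have "\<dots> = rt j * (?Y - sg i ?Y)" by (simp only: Dl)
  also have "\<dots> = rt j * ?Y - sg i (rt j * ?Y)"
    using sg_rt_other[OF assms] by (simp add: sg_mult right_diff_distrib)
  also have "\<dots> = (p - sg j p) - sg i (p - sg j p)" by (simp only: Dl)
  finally show ?thesis .
qed

lemma Dl_comm: assumes "Suc i < j \<or> Suc j < i" shows "Dl i (Dl j p) = Dl j (Dl i p)"
proof -
  have a: "Suc j < i \<or> Suc i < j" using assms by auto
  have 1: "rt i * (rt j * Dl i (Dl j p)) = (p - sg j p) - sg i (p - sg j p)" by (rule Dl_comm_aux[OF assms])
  have "rt i * (rt j * Dl j (Dl i p)) = rt j * (rt i * Dl j (Dl i p))" by (simp add: algebra_simps)
  also have "\<dots> = (p - sg i p) - sg j (p - sg i p)" by (rule Dl_comm_aux[OF a])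
  finally have 2: "rt i * (rt j * Dl j (Dl i p)) = (p - sg i p) - sg j (p - sg i p)" .
  have "(p - sg j p) - sg i (p - sg j p) = (p - sg i p) - sg j (p - sg i p)"
    using sg_comm[OF assms, of p] by (simp add: sg_diff)
  with 1 2 show ?thesis using rt_nz[of i] rt_nz[of j] by (metis mult_left_cancel)
qed

definition rr :: "nat \<Rightarrow> mpoly" where "rr i = var i - var (Suc (Suc i))"
definition VV :: "nat \<Rightarrow> mpoly" where "VV i = rt i * rt (Suc i) * rr i"

lemma sg_r_facts:
  "sg i (rt (Suc i)) = rr i" "sg i (rr i) = rt (Suc i)"
  "sg (Suc i) (rt i) = rr i" "sg (Suc i) (rr i) = rt i"
  "sg i (rt i) = - rt i" "sg (Suc i) (rt (Suc i)) = - rt (Suc i)"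
  by (simp_all add: rt_def rr_def sg_diff sg_var)

lemma rr_sum: "rr i = rt i + rt (Suc i)"
  by (simp add: rr_def rt_def)

lemma VV_nz: "VV i \<noteq> 0"
  unfolding VV_def using rt_nz var_diff_nz[of i "Suc (Suc i)"] by (simp add: rr_def)

lemma cancel_VV: "VV i * a = VV i * b \<Longrightarrow> a = b"
  using VV_nz[of i] by simp

lemma E1: "VV i * Dl i (Dl (Suc i) q) =
   rr i * (q - sg (Suc i) q) - rt (Suc i) * (sg i q - sg i (sg (Suc i) q))"
proof -
  let ?Y = "Dl (Suc i) q"
  have "VV i * Dl i ?Y = rt (Suc i) * rr i * (rt i * Dl i ?Y)"
    by (simp add: VV_def algebra_simps)
  also have "\<dots> = rt (Suc i) * rr i * (?Y - sg i ?Y)" by (simp only: Dl)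
  also have "\<dots> = rr i * (rt (Suc i) * ?Y) - sg i (rr i * (rt (Suc i) * ?Y))"
    by (simp add: sg_mult sg_r_facts algebra_simps)
  also have "\<dots> = rr i * (q - sg (Suc i) q) - sg i (rr i * (q - sg (Suc i) q))"
    by (simp add: Dl)
  also have "\<dots> = rr i * (q - sg (Suc i) q) - rt (Suc i) * (sg i q - sg i (sg (Suc i) q))"
    by (simp add: sg_mult sg_diff sg_r_facts)
  finally show ?thesis .
qed

lemma E2: "VV i * Dl (Suc i) (Dl i q) =
   rr i * (q - sg i q) - rt i * (sg (Suc i) q - sg (Suc i) (sg i q))"
proof -
  let ?Z = "Dl i q"
  have "VV i * Dl (Suc i) ?Z = rt i * rr i * (rt (Suc i) * Dl (Suc i) ?Z)"
    by (simp add: VV_def algebra_simps)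
  also have "\<dots> = rt i * rr i * (?Z - sg (Suc i) ?Z)" by (simp only: Dl)
  also have "\<dots> = rr i * (rt i * ?Z) - sg (Suc i) (rr i * (rt i * ?Z))"
    by (simp add: sg_mult sg_r_facts algebra_simps)
  also have "\<dots> = rr i * (q - sg i q) - sg (Suc i) (rr i * (q - sg i q))"
    by (simp add: Dl)
  also have "\<dots> = rr i * (q - sg i q) - rt i * (sg (Suc i) q - sg (Suc i) (sg i q))"
    by (simp add: sg_mult sg_diff sg_r_facts)
  finally show ?thesis .
qed

lemma sg_VV: "sg i (VV i) = - VV i" "sg (Suc i) (VV i) = - VV i"
  by (simp_all add: VV_def sg_mult sg_r_facts algebra_simps)

lemma Dl_braid: "Dl i (Dl (Suc i) (Dl i p)) = Dl (Suc i) (Dl i (Dl (Suc i) p))"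
proof -
  let ?s = "sg i" and ?t = "sg (Suc i)"
  let ?Z = "Dl i p" and ?Y = "Dl (Suc i) p"
  have A: "VV i * Dl i (Dl (Suc i) ?Z) = (p - ?s p) - ?t (p - ?s p) + ?s (?t (p - ?s p))"
  proof -
    have h0: "VV i * Dl i (Dl (Suc i) ?Z) = rr i * (?Z - ?t ?Z) - rt (Suc i) * (?Z - ?s (?t ?Z))"
      using E1[of i ?Z] by (simp only: sg_Dl)
    have h1: "?s (rr i * ?t ?Z) = rt (Suc i) * ?s (?t ?Z)" by (simp add: sg_mult sg_r_facts)
    have h2: "rr i * ?t ?Z = ?t (rt i * ?Z)" by (simp add: sg_mult sg_r_facts)
    have h3: "VV i * Dl i (Dl (Suc i) ?Z) = rt i * ?Z - rr i * ?t ?Z + ?s (rr i * ?t ?Z)"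
      unfolding h0 h1 by (simp add: rr_sum algebra_simps)
    show ?thesis unfolding h3 h2 Dl ..
  qed
  have B: "VV i * Dl (Suc i) (Dl i ?Y) = (p - ?t p) - ?s (p - ?t p) + ?t (?s (p - ?t p))"
  proof -
    have h0: "VV i * Dl (Suc i) (Dl i ?Y) = rr i * (?Y - ?s ?Y) - rt i * (?Y - ?t (?s ?Y))"
      using E2[of i ?Y] by (simp only: sg_Dl)
    have h1: "?t (rr i * ?s ?Y) = rt i * ?t (?s ?Y)" by (simp add: sg_mult sg_r_facts)
    have h2: "rr i * ?s ?Y = ?s (rt (Suc i) * ?Y)" by (simp add: sg_mult sg_r_facts)
    have h3: "VV i * Dl (Suc i) (Dl i ?Y) = rt (Suc i) * ?Y - rr i * ?s ?Y + ?t (rr i * ?s ?Y)"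
      unfolding h0 h1 by (simp add: rr_sum algebra_simps)
    show ?thesis unfolding h3 h2 Dl ..
  qed
  have "(p - ?s p) - ?t (p - ?s p) + ?s (?t (p - ?s p)) = (p - ?t p) - ?s (p - ?t p) + ?t (?s (p - ?t p))"
    by (simp add: sg_diff sg_braid)
  with A B show ?thesis by (metis cancel_VV)
qed

lemma Dl_I3: "Dl i (sg (Suc i) (sg i p)) = sg (Suc i) (sg i (Dl (Suc i) p))"
proof (rule Dl_unique)
  have "rt i * sg (Suc i) (sg i (Dl (Suc i) p)) = sg (Suc i) (sg i (rt (Suc i) * Dl (Suc i) p))"
    by (simp add: sg_mult sg_r_facts)
  also have "\<dots> = sg (Suc i) (sg i (p - sg (Suc i) p))" by (simp only: Dl)
  also have "\<dots> = sg (Suc i) (sg i p) - sg i (sg (Suc i) (sg i p))"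
    by (simp add: sg_diff sg_braid)
  finally show "rt i * sg (Suc i) (sg i (Dl (Suc i) p)) = sg (Suc i) (sg i p) - sg i (sg (Suc i) (sg i p))" .
qed

lemma Dl_I1: "Dl i (Dl (Suc i) (sg i p)) + sg i (Dl (Suc i) (Dl i p)) = Dl (Suc i) (sg i (Dl (Suc i) p))"
proof -
  let ?s = "sg i" and ?t = "sg (Suc i)"
  let ?r1 = "rt i" and ?r2 = "rt (Suc i)" and ?r3 = "rr i"
  have A: "VV i * Dl i (Dl (Suc i) (?s p)) = ?r3 * (?s p - ?t (?s p)) - ?r2 * (p - ?s (?t (?s p)))"
    using E1[of i "?s p"] by simp
  have B0: "VV i * Dl (Suc i) (Dl i p) = ?r3 * (p - ?s p) - ?r1 * (?t p - ?t (?s p))"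
    by (rule E2)
  have B1: "?s (VV i * Dl (Suc i) (Dl i p)) = - (VV i * ?s (Dl (Suc i) (Dl i p)))"
    by (simp add: sg_mult sg_VV)
  have B2: "?s (?r3 * (p - ?s p) - ?r1 * (?t p - ?t (?s p))) = ?r2 * (?s p - p) + ?r1 * (?s (?t p) - ?s (?t (?s p)))"
    by (simp add: sg_mult sg_diff sg_r_facts)
  have B: "VV i * ?s (Dl (Suc i) (Dl i p)) = - (?r2 * (?s p - p) + ?r1 * (?s (?t p) - ?s (?t (?s p))))"
    using B0 B1 B2 by (metis minus_minus)
  let ?Y = "Dl (Suc i) p"
  have C: "VV i * Dl (Suc i) (?s ?Y) = ?r1 * (?s p - ?s (?t p)) - ?r3 * (?t (?s p) - ?t (?s (?t p)))"
  proof -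
    have c0: "VV i * Dl (Suc i) (?s ?Y) = ?r1 * ?r3 * (?r2 * Dl (Suc i) (?s ?Y))"
      by (simp add: VV_def algebra_simps)
    have c1: "?r1 * ?r3 * (?r2 * Dl (Suc i) (?s ?Y)) = ?r1 * ?r3 * ?s ?Y - ?t (?r1 * ?r3 * ?s ?Y)"
      unfolding Dl by (simp add: sg_mult sg_r_facts algebra_simps)
    have c2: "?r1 * ?r3 * ?s ?Y = - ?s (?r1 * (?r2 * ?Y))"
      by (simp add: sg_mult sg_r_facts)
    have c3: "?r2 * ?Y = p - ?t p" by (rule Dl)
    show ?thesis unfolding c0 c1 c2 c3 by (simp add: sg_mult sg_diff sg_minus sg_r_facts algebra_simps)
  qed
  have "VV i * (Dl i (Dl (Suc i) (?s p)) + ?s (Dl (Suc i) (Dl i p))) = VV i * Dl (Suc i) (?s ?Y)"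
    unfolding distrib_left A B C using sg_braid[of i p] by (simp add: rr_sum algebra_simps)
  then show ?thesis by (rule cancel_VV)
qed

lemma Dl_I2: "Dl i (sg (Suc i) (Dl i q)) = Dl (Suc i) (Dl i (sg (Suc i) q)) + sg (Suc i) (Dl i (Dl (Suc i) q))"
proof -
  let ?s = "sg i" and ?t = "sg (Suc i)"
  let ?r1 = "rt i" and ?r2 = "rt (Suc i)" and ?r3 = "rr i"
  let ?Z = "Dl i q"
  have L: "VV i * Dl i (?t ?Z) = ?r2 * (?t q - ?t (?s q)) - ?r3 * (?s (?t q) - ?s (?t (?s q)))"
  proof -
    have c0: "VV i * Dl i (?t ?Z) = ?r2 * ?r3 * (?r1 * Dl i (?t ?Z))"
      by (simp add: VV_def algebra_simps)
    have c1: "?r2 * ?r3 * (?r1 * Dl i (?t ?Z)) = ?r2 * ?r3 * ?t ?Z - ?s (?r2 * ?r3 * ?t ?Z)"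
      unfolding Dl by (simp add: sg_mult sg_r_facts algebra_simps)
    have c2: "?r2 * ?r3 * ?t ?Z = - ?t (?r2 * (?r1 * ?Z))"
      by (simp add: sg_mult sg_r_facts)
    have c3: "?r1 * ?Z = q - ?s q" by (rule Dl)
    show ?thesis unfolding c0 c1 c2 c3 by (simp add: sg_mult sg_diff sg_minus sg_r_facts algebra_simps)
  qed
  have R1: "VV i * Dl (Suc i) (Dl i (?t q)) = ?r3 * (?t q - ?s (?t q)) - ?r1 * (q - ?t (?s (?t q)))"
    using E2[of i "?t q"] by simp
  have B0: "VV i * Dl i (Dl (Suc i) q) = ?r3 * (q - ?t q) - ?r2 * (?s q - ?s (?t q))"
    by (rule E1)
  have B1: "?t (VV i * Dl i (Dl (Suc i) q)) = - (VV i * ?t (Dl i (Dl (Suc i) q)))"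
    by (simp add: sg_mult sg_VV)
  have B2: "?t (?r3 * (q - ?t q) - ?r2 * (?s q - ?s (?t q))) = ?r1 * (?t q - q) + ?r2 * (?t (?s q) - ?t (?s (?t q)))"
    by (simp add: sg_mult sg_diff sg_r_facts)
  have R2: "VV i * ?t (Dl i (Dl (Suc i) q)) = - (?r1 * (?t q - q) + ?r2 * (?t (?s q) - ?t (?s (?t q))))"
    using B0 B1 B2 by (metis minus_minus)
  have "VV i * Dl i (?t ?Z) = VV i * (Dl (Suc i) (Dl i (?t q)) + ?t (Dl i (Dl (Suc i) q)))"
    unfolding distrib_left L R1 R2 using sg_braid[of i q] by (simp add: rr_sum algebra_simps)
  then show ?thesis by (rule cancel_VV)
qed

definition MS :: "nat \<Rightarrow> nat set \<Rightarrow> (nat \<Rightarrow>\<^sub>0 nat) set" where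
  "MS d A = {m. Poly_Mapping.keys m \<subseteq> A \<and> (\<Sum>k\<in>A. Poly_Mapping.lookup m k) = d}"

lemma complete_h_MS: "complete_h d A = (\<Sum>m\<in>MS d A. frag_of m)"
  unfolding complete_h_def MS_def ..

lemma finite_MS: assumes "finite A" shows "finite (MS d A)"
proof -
  let ?f = "\<lambda>m::nat\<Rightarrow>\<^sub>0nat. restrict (Poly_Mapping.lookup m) A"
  have "?f ` MS d A \<subseteq> PiE A (\<lambda>_. {0..d})"
  proof
    fix g assume "g \<in> ?f ` MS d A"
    then obtain m where m: "m \<in> MS d A" "g = ?f m" by blast
    have "Poly_Mapping.lookup m k \<le> d" if "k \<in> A" for k
      using m(1) member_le_sum[of k A "Poly_Mapping.lookup m"] assms that by (simp add: MS_def)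
    then show "g \<in> PiE A (\<lambda>_. {0..d})" using m(2) by (auto simp: PiE_iff)
  qed
  then have "finite (?f ` MS d A)" by (rule finite_subset) (simp add: assms finite_PiE)
  moreover have "inj_on ?f (MS d A)"
  proof (rule inj_onI)
    fix a b assume ab: "a \<in> MS d A" "b \<in> MS d A" "?f a = ?f b"
    show "a = b"
    proof (rule poly_mapping_eqI)
      fix k show "Poly_Mapping.lookup a k = Poly_Mapping.lookup b k"
      proof (cases "k \<in> A")
        case True then show ?thesis using ab(3) by (metis restrict_apply')
      next
        case False
        then have "k \<notin> Poly_Mapping.keys a" "k \<notin> Poly_Mapping.keys b" using ab(1,2) by (auto simp: MS_def)
        then show ?thesis by (simp add: not_in_keys_iff_lookup_eq_zero)
      qed
    qed
  qed
  ultimately show ?thesis by (rule finite_imageD)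
qed

lemma sg_frag: "sg k (frag_of m) = frag_of (mk k m)"
  by (rule sg_single)

lemma mk_MS: assumes "m \<in> MS d A" shows "mk k m \<in> MS d (tr k ` A)"
proof -
  have "Poly_Mapping.keys (mk k m) \<subseteq> tr k ` A" using assms by (auto simp: MS_def keys_mk)
  moreover have "(\<Sum>x\<in>tr k ` A. Poly_Mapping.lookup (mk k m) x) = (\<Sum>a\<in>A. Poly_Mapping.lookup m a)"
    by (subst sum.reindex[OF inj_on_transpose]) (simp add: lookup_mk)
  ultimately show ?thesis using assms by (simp add: MS_def)
qed

lemma h_sg: "sg k (complete_h d A) = complete_h d (tr k ` A)"
proof -
  have bij: "bij_betw (mk k) (MS d A) (MS d (tr k ` A))"
  proof (rule bij_betw_byWitness[where f' = "mk k"])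
    show "\<forall>a\<in>MS d A. mk k (mk k a) = a" by simp
    show "\<forall>a'\<in>MS d (tr k ` A). mk k (mk k a') = a'" by simp
    show "mk k ` MS d A \<subseteq> MS d (tr k ` A)" using mk_MS by blast
    have "tr k ` tr k ` A = A" by (simp add: image_image)
    then show "mk k ` MS d (tr k ` A) \<subseteq> MS d A" using mk_MS[of _ d "tr k ` A" k] by auto
  qed
  have "sg k (complete_h d A) = (\<Sum>m\<in>MS d A. frag_of (mk k m))"
    by (simp add: complete_h_MS sg_sum sg_frag)
  also have "\<dots> = (\<Sum>m\<in>MS d (tr k ` A). frag_of m)"
    using sum.reindex_bij_betw[OF bij, of frag_of] .
  finally show ?thesis by (simp add: complete_h_MS)
qed

lemma h_sg_same: "(k \<in> A \<longleftrightarrow> Suc k \<in> A) \<Longrightarrow> sg k (complete_h d A) = complete_h d A"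
  by (simp add: h_sg)

lemma h_zero: "finite A \<Longrightarrow> complete_h 0 A = 1"
proof -
  assume A: "finite A"
  have "MS 0 A = {0}"
  proof
    show "MS 0 A \<subseteq> {0}"
    proof
      fix m assume m: "m \<in> MS 0 A"
      have "\<forall>k\<in>A. Poly_Mapping.lookup m k = 0" using m A by (simp add: MS_def)
      then have "m = 0" using m by (intro poly_mapping_eqI) (auto simp: MS_def in_keys_iff)
      then show "m \<in> {0}" by simp
    qed
    show "{0} \<subseteq> MS 0 A" by (simp add: MS_def)
  qed
  then show ?thesis by (simp add: complete_h_MS)
qed

lemma h_empty: "complete_h (Suc e) {} = 0"
proof -
  have "MS (Suc e) {} = {}" by (simp add: MS_def)
  then show ?thesis by (simp add: complete_h_MS)
qed

lemma h_rec: assumes A: "finite A" and a: "a \<in> A"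
  shows "complete_h (Suc e) A = complete_h (Suc e) (A - {a}) + var a * complete_h e A"
proof -
  let ?sh = "\<lambda>m::nat\<Rightarrow>\<^sub>0nat. Poly_Mapping.single a 1 + m"
  have lk: "Poly_Mapping.lookup (?sh m) x = (if x = a then 1 else 0) + Poly_Mapping.lookup m x" for m x
    by (simp add: lookup_add lookup_single when_def)
  have sumA: "(\<Sum>k\<in>A. Poly_Mapping.lookup m k) = Poly_Mapping.lookup m a + (\<Sum>k\<in>A - {a}. Poly_Mapping.lookup m k)" for m
    using A a by (simp add: sum.remove)
  have sh_sum: "(\<Sum>k\<in>A. Poly_Mapping.lookup (?sh m) k) = Suc (\<Sum>k\<in>A. Poly_Mapping.lookup m k)" for m
  proof -
    have "(\<Sum>k\<in>A-{a}. Poly_Mapping.lookup (?sh m) k) = (\<Sum>k\<in>A-{a}. Poly_Mapping.lookup m k)"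
      by (rule sum.cong) (simp_all add: lookup_add lookup_single when_def)
    then show ?thesis using sumA[of "?sh m"] sumA[of m] by (simp add: lookup_add lookup_single)
  qed
  have keys_sh: "Poly_Mapping.keys (?sh m) = insert a (Poly_Mapping.keys m)" for m
    by (auto simp: in_keys_iff lookup_add lookup_single when_def split: if_splits)
  have split: "MS (Suc e) A = MS (Suc e) (A - {a}) \<union> ?sh ` MS e A"
  proof
    show "MS (Suc e) A \<subseteq> MS (Suc e) (A - {a}) \<union> ?sh ` MS e A"
    proof
      fix m assume m: "m \<in> MS (Suc e) A"
      show "m \<in> MS (Suc e) (A - {a}) \<union> ?sh ` MS e A"
      proof (cases "Poly_Mapping.lookup m a = 0")
        case True
        then have "m \<in> MS (Suc e) (A - {a})" using m sumA[of m] by (auto simp: MS_def in_keys_iff)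
        then show ?thesis by blast
      next
        case False
        define m' where "m' = Poly_Mapping.update a (Poly_Mapping.lookup m a - 1) m"
        have lm': "Poly_Mapping.lookup m' x = (if x = a then Poly_Mapping.lookup m a - 1 else Poly_Mapping.lookup m x)" for x
          by (simp add: m'_def lookup_update)
        have "m = ?sh m'" using False by (intro poly_mapping_eqI) (simp add: lookup_add lookup_single when_def lm')
        moreover have "m' \<in> MS e A"
        proof -
          have "Poly_Mapping.keys m' \<subseteq> A" using m a by (auto simp: MS_def in_keys_iff lm' split: if_splits)
          moreover have "(\<Sum>k\<in>A. Poly_Mapping.lookup m' k) = e"
            using sumA[of m'] sumA[of m] m False by (simp add: MS_def lm')
          ultimately show ?thesis by (simp add: MS_def)
        qed
        ultimately show ?thesis by blast
      qed
    qed
    show "MS (Suc e) (A - {a}) \<union> ?sh ` MS e A \<subseteq> MS (Suc e) A"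
    proof
      fix m assume "m \<in> MS (Suc e) (A - {a}) \<union> ?sh ` MS e A"
      then show "m \<in> MS (Suc e) A"
      proof
        assume m: "m \<in> MS (Suc e) (A - {a})"
        then have "Poly_Mapping.lookup m a = 0" by (auto simp: MS_def in_keys_iff)
        then show ?thesis using m sumA[of m] by (auto simp: MS_def)
      next
        assume "m \<in> ?sh ` MS e A"
        then obtain m' where "m' \<in> MS e A" "m = ?sh m'" by blast
        then show ?thesis using a sh_sum[of m'] keys_sh[of m'] by (auto simp: MS_def)
      qed
    qed
  qed
  have disj: "MS (Suc e) (A - {a}) \<inter> ?sh ` MS e A = {}"
  proof (rule equals0I)
    fix m assume "m \<in> MS (Suc e) (A - {a}) \<inter> ?sh ` MS e A"
    then obtain m' where m: "m \<in> MS (Suc e) (A - {a})" "m = ?sh m'" by blast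
    have "a \<in> Poly_Mapping.keys m" unfolding m(2) keys_sh by simp
    then show False using m(1) by (auto simp: MS_def)
  qed
  have inj: "inj_on ?sh (MS e A)" by (rule inj_onI) simp
  have "complete_h (Suc e) A = complete_h (Suc e) (A - {a}) + (\<Sum>m\<in>?sh ` MS e A. frag_of m)"
    unfolding complete_h_MS split
    by (intro sum.union_disjoint finite_imageI finite_MS A disj finite_Diff)
  also have "(\<Sum>m\<in>?sh ` MS e A. frag_of m) = (\<Sum>m\<in>MS e A. var a * frag_of m)"
    by (subst sum.reindex[OF inj]) (simp add: var_def mult_single)
  finally show ?thesis by (simp add: complete_h_MS sum_distrib_left)
qed

lemma h_single: "complete_h e {b} = var b ^ e"
proof (induction e)
  case 0 then show ?case by (simp add: h_zero)
next
  case (Suc e)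
  then show ?case using h_rec[of "{b}" b e] by (simp add: h_empty)
qed

lemma h_A: assumes S: "finite S" "k \<notin> S" "Suc k \<notin> S"
  shows "rt k * complete_h e (insert k (insert (Suc k) S)) =
     complete_h (Suc e) (insert k S) - complete_h (Suc e) (insert (Suc k) S)"
proof -
  let ?B = "insert k (insert (Suc k) S)"
  have 1: "complete_h (Suc e) ?B = complete_h (Suc e) (insert k S) + var (Suc k) * complete_h e ?B"
    using h_rec[of ?B "Suc k" e] S by (simp add: insert_Diff_if)
  have 2: "complete_h (Suc e) ?B = complete_h (Suc e) (insert (Suc k) S) + var k * complete_h e ?B"
    using h_rec[of ?B k e] S by (simp add: insert_Diff_if)
  show ?thesis using 1 2 unfolding rt_def by (simp add: algebra_simps)
qed

lemma Dl_h: assumes S: "finite S" "k \<notin> S" "Suc k \<notin> S"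
  shows "Dl k (complete_h (Suc e) (insert k S)) = complete_h e (insert k (insert (Suc k) S))"
proof (rule Dl_unique)
  have "tr k ` insert k S = insert (Suc k) S"
  proof -
    have "tr k ` S = S" using S by (intro transpose_image_eq) simp
    then show ?thesis by simp
  qed
  then show "rt k * complete_h e (insert k (insert (Suc k) S)) =
    complete_h (Suc e) (insert k S) - sg k (complete_h (Suc e) (insert k S))"
    using h_A[OF S] by (simp add: h_sg)
qed

definition mkR :: "(nat \<Rightarrow> mpoly) \<Rightarrow> relt" where
  "mkR v = (\<lambda>T. if card T = 1 then v (the_elem T) else 0)"

definition Dv :: "nat \<Rightarrow> (nat \<Rightarrow> mpoly) \<Rightarrow> nat \<Rightarrow> mpoly" where
  "Dv k v = (\<lambda>l. Dl k (v l) - (if l = Suc k then sg k (v k) else 0))"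

lemma mkR_single [simp]: "mkR v {l} = v l"
  by (simp add: mkR_def)

lemma demazure_mkR: "demazure k (mkR v) = mkR (Dv k v)"
  unfolding demazure_def
proof (rule the_equality)
  show "\<forall>T. (var k - var (Suc k)) * mkR (Dv k v) T = mkR v T - s_act k (mkR v) T"
  proof
    fix T
    show "(var k - var (Suc k)) * mkR (Dv k v) T = mkR v T - s_act k (mkR v) T"
    proof (cases "card T = 1")
      case True
      then obtain l where T: "T = {l}" by (rule card_1_singletonE)
      show ?thesis
      proof (cases "l = Suc k")
        case True
        have "insert k ({Suc k} - {Suc k}) = {k}" by simp
        then show ?thesis using True T
          by (simp add: s_act_def Dv_def right_diff_distrib Dl[unfolded rt_def])
      next
        case False
        then show ?thesis using T
          by (simp add: s_act_def Dv_def Dl[unfolded rt_def])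
      qed
    next
      case False
      have "card (insert k (T - {Suc k})) \<noteq> 1" if "Suc k \<in> T" "k \<notin> T"
      proof (cases "finite T")
        case True
        then have "card T > 0" using that by (auto simp: card_gt_0_iff)
        then show ?thesis using that False True by (simp add: card_insert_if card_Diff_singleton)
      next
        case False
        then have "infinite (insert k (T - {Suc k}))" by simp
        then show ?thesis by simp
      qed
      then show ?thesis using False by (auto simp: s_act_def mkR_def)
    qed
  qed
next
  fix g assume g: "\<forall>T. (var k - var (Suc k)) * g T = mkR v T - s_act k (mkR v) T"
  show "g = mkR (Dv k v)"
  proof
    fix T
    have "rt k * g T = rt k * mkR (Dv k v) T"
    proof (cases "card T = 1")
      case True
      then obtain l where T: "T = {l}" by (rule card_1_singletonE)
      have "insert k ({Suc k} - {Suc k}) = {k}" by simp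
      then show ?thesis using g[rule_format, of T] T
        by (cases "l = Suc k") (simp_all add: rt_def s_act_def Dv_def right_diff_distrib Dl[unfolded rt_def])
    next
      case False
      have "card (insert k (T - {Suc k})) \<noteq> 1" if "Suc k \<in> T" "k \<notin> T"
      proof (cases "finite T")
        case True
        then have "card T > 0" using that by (auto simp: card_gt_0_iff)
        then show ?thesis using that False True by (simp add: card_insert_if card_Diff_singleton)
      next
        case False
        then have "infinite (insert k (T - {Suc k}))" by simp
        then show ?thesis by simp
      qed
      then show ?thesis using False g[rule_format, of T] by (auto simp: s_act_def mkR_def rt_def)
    qed
    then show "g T = mkR (Dv k v) T" by (rule cancel_rt)
  qed
qed

definition smul :: "mpoly \<Rightarrow> (nat \<Rightarrow> mpoly) \<Rightarrow> nat \<Rightarrow> mpoly" where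
  "smul p v = (\<lambda>l. p * v l)"

lemma Dv_smul: "Dv k (smul p v) = (\<lambda>l. Dl k p * v l + sg k p * Dv k v l)"
  by (rule ext) (simp add: Dv_def smul_def Dl_mult sg_mult algebra_simps)

lemma Dv_smul_inv: "Dv k v = (\<lambda>_. 0) \<Longrightarrow> Dv k (smul p v) = smul (Dl k p) v"
  unfolding Dv_smul by (simp add: smul_def fun_eq_iff)

lemma Dv_smul_sym: "sg k p = p \<Longrightarrow> Dv k (smul p v) = smul p (Dv k v)"
  unfolding Dv_smul by (simp add: smul_def Dl_sym fun_eq_iff)

lemma Dv_comm: assumes "Suc i < j \<or> Suc j < i" shows "Dv i (Dv j v) = Dv j (Dv i v)"
proof -
  have a: "Suc j < i \<or> Suc i < j" using assms by auto
  show ?thesis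
    using assms
    by (auto simp: fun_eq_iff Dv_def Dl_diff Dl_comm[OF assms] Dl_sg_comm[OF assms] Dl_sg_comm[OF a] sg_diff)
qed

lemma Dv_braid: "Dv i (Dv (Suc i) (Dv i v)) = Dv (Suc i) (Dv i (Dv (Suc i) v))"
proof (rule ext)
  fix l
  consider "l = Suc i" | "l = Suc (Suc i)" | "l \<noteq> Suc i \<and> l \<noteq> Suc (Suc i)" by blast
  then show "Dv i (Dv (Suc i) (Dv i v)) l = Dv (Suc i) (Dv i (Dv (Suc i) v)) l"
  proof cases
    case 1
    then show ?thesis
      by (simp add: Dv_def Dl_diff sg_diff Dl_braid Dl_I1[symmetric] algebra_simps)
  next
    case 2
    then show ?thesis
      by (simp add: Dv_def Dl_diff sg_diff Dl_braid Dl_I2 Dl_I3 sg_Dl algebra_simps)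
  next
    case 3
    then show ?thesis by (simp add: Dv_def Dl_braid)
  qed
qed

lemma foldr_tr: "foldr (\<lambda>i p. tr i \<circ> p) w g = word_prod w \<circ> g"
  unfolding word_prod_def by (induction w) (simp_all add: o_assoc)

lemma wp_append: "word_prod (w @ u) = word_prod w \<circ> word_prod u"
proof -
  have "word_prod (w @ u) = foldr (\<lambda>i p. tr i \<circ> p) w (word_prod u)"
    unfolding word_prod_def by simp
  then show ?thesis by (simp only: foldr_tr)
qed

lemma wp_Nil [simp]: "word_prod [] = id"
  by (simp add: word_prod_def)

lemma wp_Cons: "word_prod (k # w) = tr k \<circ> word_prod w"
  by (simp add: word_prod_def)

lemma wp_single: "word_prod [k] = tr k"
  by (simp add: wp_Cons)

lemma wp_snoc: "word_prod (w @ [k]) = word_prod w \<circ> tr k"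
  by (simp only: wp_append wp_single)

definition okw :: "nat \<Rightarrow> nat list \<Rightarrow> bool" where
  "okw n w \<longleftrightarrow> set w \<subseteq> {1..<n}"

lemma bij_wp: "bij (word_prod w)"
proof (induction w)
  case Nil show ?case by (simp only: wp_Nil bij_id)
next
  case (Cons k w) show ?case unfolding wp_Cons by (rule bij_comp[OF Cons.IH bij_transpose])
qed

lemma inj_wp: "inj (word_prod w)"
  using bij_wp bij_is_inj by blast

lemma wp_range: "okw n w \<Longrightarrow> (1 \<le> word_prod w x \<and> word_prod w x \<le> n) \<longleftrightarrow> (1 \<le> x \<and> x \<le> n)"
proof (induction w arbitrary: x)
  case Nil then show ?case by simp
next
  case (Cons k w)
  then have k: "1 \<le> k" "k < n" and ok: "okw n w" by (auto simp: okw_def)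
  have "(1 \<le> tr k y \<and> tr k y \<le> n) \<longleftrightarrow> (1 \<le> y \<and> y \<le> n)" for y
    using k by (auto simp: transpose_def)
  then show ?case using Cons.IH[OF ok] by (simp add: wp_Cons)
qed

lemma wp_fix: "okw n w \<Longrightarrow> \<not> (1 \<le> x \<and> x \<le> n) \<Longrightarrow> word_prod w x = x"
proof (induction w)
  case Nil then show ?case by simp
next
  case (Cons k w)
  then have k: "1 \<le> k" "k < n" and ok: "okw n w" by (auto simp: okw_def)
  have "word_prod w x = x" using Cons ok by blast
  then show ?case using k Cons.prems(2) by (auto simp: wp_Cons transpose_def)
qed

definition INV :: "nat \<Rightarrow> (nat \<Rightarrow> nat) \<Rightarrow> (nat \<times> nat) set" where
  "INV n f = {(p, q). 1 \<le> p \<and> p < q \<and> q \<le> n \<and> f q < f p}"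

definition ninv :: "nat \<Rightarrow> (nat \<Rightarrow> nat) \<Rightarrow> nat" where
  "ninv n f = card (INV n f)"

lemma finite_INV: "finite (INV n f)"
  by (rule finite_subset[of _ "{1..n} \<times> {1..n}"]) (auto simp: INV_def)

lemma INV_swap:
  assumes k: "1 \<le> k" "k < n"
  shows "INV n (f \<circ> tr k) - {(k, Suc k)} = (\<lambda>(p, q). (tr k p, tr k q)) ` (INV n f - {(k, Suc k)})"
proof -
  let ?psi = "\<lambda>(p::nat, q::nat). (tr k p, tr k q)"
  have key: "x \<in> INV n (f \<circ> tr k) - {(k, Suc k)} \<longleftrightarrow> ?psi x \<in> INV n f - {(k, Suc k)}" for x
  proof (cases x)
    case (Pair p q)
    show ?thesis unfolding Pair using k
      by (simp add: INV_def transpose_def split: if_splits) linarith?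
  qed
  show ?thesis
  proof
    show "INV n (f \<circ> tr k) - {(k, Suc k)} \<subseteq> ?psi ` (INV n f - {(k, Suc k)})"
    proof
      fix x assume "x \<in> INV n (f \<circ> tr k) - {(k, Suc k)}"
      then have "?psi x \<in> INV n f - {(k, Suc k)}" using key by blast
      moreover have "x = ?psi (?psi x)" by (cases x) simp
      ultimately show "x \<in> ?psi ` (INV n f - {(k, Suc k)})" by blast
    qed
    show "?psi ` (INV n f - {(k, Suc k)}) \<subseteq> INV n (f \<circ> tr k) - {(k, Suc k)}"
    proof
      fix y assume "y \<in> ?psi ` (INV n f - {(k, Suc k)})"
      then obtain x where x: "x \<in> INV n f - {(k, Suc k)}" "y = ?psi x" by blast
      have "?psi (?psi x) = x" by (cases x) simp
      then show "y \<in> INV n (f \<circ> tr k) - {(k, Suc k)}" using key[of y] x by simp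
    qed
  qed
qed

lemma ninv_swap:
  assumes k: "1 \<le> k" "k < n" and inj: "f k \<noteq> f (Suc k)"
  shows "ninv n (f \<circ> tr k) = (if f (Suc k) < f k then ninv n f - 1 else Suc (ninv n f))"
proof -
  let ?psi = "\<lambda>(p::nat, q::nat). (tr k p, tr k q)"
  have injpsi: "inj ?psi" by (rule injI) (auto simp: transpose_eq_iff)
  have c: "card (INV n (f \<circ> tr k) - {(k, Suc k)}) = card (INV n f - {(k, Suc k)})"
    unfolding INV_swap[OF k] by (rule card_image) (rule inj_on_subset[OF injpsi], simp)
  have e1: "(k, Suc k) \<in> INV n (f \<circ> tr k) \<longleftrightarrow> f k < f (Suc k)" using k by (simp add: INV_def)
  have e2: "(k, Suc k) \<in> INV n f \<longleftrightarrow> f (Suc k) < f k" using k by (simp add: INV_def)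
  show ?thesis
  proof (cases "f (Suc k) < f k")
    case True
    then have "(k, Suc k) \<notin> INV n (f \<circ> tr k)" "(k, Suc k) \<in> INV n f" using e1 e2 by auto
    then show ?thesis using c True finite_INV by (simp add: ninv_def card_Diff_singleton)
  next
    case False
    then have "(k, Suc k) \<in> INV n (f \<circ> tr k)" "(k, Suc k) \<notin> INV n f" using e1 e2 inj by auto
    moreover have "card (INV n (f \<circ> tr k)) > 0" using calculation(1) finite_INV by (auto simp: card_gt_0_iff)
    ultimately show ?thesis using c False finite_INV
      by (simp add: ninv_def card_Diff_singleton)
  qed
qed

lemma okw_append: "okw n (w @ u) \<longleftrightarrow> okw n w \<and> okw n u"
  by (auto simp: okw_def)

lemma okw_single: "okw n [k] \<longleftrightarrow> 1 \<le> k \<and> k < n"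
  by (auto simp: okw_def)

lemma wp_neq: "word_prod w k \<noteq> word_prod w (Suc k)"
  using inj_wp[of w] by (metis injD n_not_Suc_n)

lemma ninv_snoc: assumes "okw n (w @ [k])"
  shows "ninv n (word_prod (w @ [k])) = (if word_prod w (Suc k) < word_prod w k then ninv n (word_prod w) - 1 else Suc (ninv n (word_prod w)))"
  using assms ninv_swap[of k n "word_prod w", OF _ _ wp_neq] by (simp add: okw_def wp_snoc)

lemma ninv_le_length: "okw n w \<Longrightarrow> ninv n (word_prod w) \<le> length w"
proof (induction w rule: rev_induct)
  case Nil
  have "INV n id = {}" by (auto simp: INV_def)
  then show ?case by (simp only: wp_Nil ninv_def) simp
next
  case (snoc k w)
  then have "okw n w" by (simp add: okw_append)
  then show ?case using snoc ninv_snoc[OF snoc.prems] by auto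
qed

lemma mono_chain: "(\<And>k. p \<le> k \<Longrightarrow> k < q \<Longrightarrow> f k \<le> f (Suc k)) \<Longrightarrow> p \<le> q \<Longrightarrow> (f p :: nat) \<le> f q"
proof (induction q)
  case 0 then show ?case by simp
next
  case (Suc q)
  show ?case
  proof (cases "p = Suc q")
    case True then show ?thesis by simp
  next
    case False
    then have "p \<le> q" using Suc.prems by simp
    then have "f p \<le> f q" using Suc by simp
    also have "f q \<le> f (Suc q)" using Suc.prems(1)[of q] \<open>p \<le> q\<close> by simp
    finally show ?thesis .
  qed
qed

lemma descent_exists: assumes "ninv n f > 0"
  shows "\<exists>k. 1 \<le> k \<and> k < n \<and> f (Suc k) < f k"
proof (rule ccontr)
  assume no: "\<not> ?thesis"
  from assms have "INV n f \<noteq> {}" by (auto simp: ninv_def)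
  then obtain p q where pq: "1 \<le> p" "p < q" "q \<le> n" "f q < f p" by (auto simp: INV_def)
  have h: "f k \<le> f (Suc k)" if "p \<le> k" "k < q" for k
  proof -
    have "1 \<le> k" "k < n" using that pq by auto
    then show ?thesis using no by (auto simp: not_less)
  qed
  have "f p \<le> f q" using mono_chain[of p q f, OF h] pq by simp
  with pq show False by simp
qed

lemma inc_id: assumes inc: "\<And>k. 1 \<le> k \<Longrightarrow> k < n \<Longrightarrow> f k < f (Suc k)"
  and rng: "\<And>x. 1 \<le> x \<Longrightarrow> x \<le> n \<Longrightarrow> 1 \<le> f x \<and> f x \<le> (n::nat)"
  shows "1 \<le> x \<Longrightarrow> x \<le> n \<Longrightarrow> f x = x"
proof -
  have lo: "j \<le> f j" if "1 \<le> j" "j \<le> n" for j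
    using that
  proof (induction j)
    case 0 then show ?case by simp
  next
    case (Suc j)
    show ?case
    proof (cases "j = 0")
      case True then show ?thesis using rng[of 1] Suc.prems by simp
    next
      case False
      then have "j \<le> f j" using Suc by simp
      also have "f j < f (Suc j)" using inc[of j] Suc.prems False by simp
      finally show ?thesis by simp
    qed
  qed
  have hi: "f (n - d) \<le> n - d" if "d < n" for d
    using that
  proof (induction d)
    case 0 then show ?case using rng[of n] by simp
  next
    case (Suc d)
    then have "f (n - d) \<le> n - d" by simp
    moreover have "f (n - Suc d) < f (Suc (n - Suc d))" using inc[of "n - Suc d"] Suc.prems by simp
    moreover have "Suc (n - Suc d) = n - d" using Suc.prems by simp
    ultimately show ?case by simp
  qed
  assume x: "1 \<le> x" "x \<le> n"
  have "f (n - (n - x)) \<le> n - (n - x)" by (rule hi) (use x in simp)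
  then have "f x \<le> x" using x by simp
  with lo[OF x] show "f x = x" by simp
qed

lemma ninv0_id: assumes ok: "okw n w" and z: "ninv n (word_prod w) = 0"
  shows "word_prod w = id"
proof
  fix x
  let ?f = "word_prod w"
  have inc: "?f k < ?f (Suc k)" if "1 \<le> k" "k < n" for k
  proof -
    have "\<not> ?f (Suc k) < ?f k"
    proof
      assume "?f (Suc k) < ?f k"
      then have "(k, Suc k) \<in> INV n ?f" using that by (simp add: INV_def)
      then have "ninv n ?f > 0" using finite_INV unfolding ninv_def by (auto simp: card_gt_0_iff)
      then show False using z by simp
    qed
    then show ?thesis using wp_neq[of w k] by simp
  qed
  show "?f x = id x"
  proof (cases "1 \<le> x \<and> x \<le> n")
    case True
    then show ?thesis using inc_id[of n ?f x] inc wp_range[OF ok] by auto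
  next
    case False then show ?thesis using wp_fix[OF ok] by simp
  qed
qed

lemma reduced_exists: "okw n w \<Longrightarrow> \<exists>c. okw n c \<and> word_prod c = word_prod w \<and> length c = ninv n (word_prod w)"
proof (induction "ninv n (word_prod w)" arbitrary: w rule: less_induct)
  case less
  show ?case
  proof (cases "ninv n (word_prod w) = 0")
    case True
    then show ?thesis using ninv0_id[OF less.prems] by (intro exI[of _ "[]"]) (simp add: okw_def)
  next
    case False
    then obtain k where k: "1 \<le> k" "k < n" "word_prod w (Suc k) < word_prod w k"
      using descent_exists by blast
    have ok: "okw n (w @ [k])" using less.prems k by (simp add: okw_append okw_single)
    have lt: "ninv n (word_prod (w @ [k])) < ninv n (word_prod w)"
      using ninv_snoc[OF ok] k False by simp
    obtain c where c: "okw n c" "word_prod c = word_prod (w @ [k])"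
        "length c = ninv n (word_prod (w @ [k]))"
      using less.hyps[OF lt ok] by blast
    have "word_prod (c @ [k]) = word_prod w"
      using c(2) by (simp add: wp_snoc comp_assoc)
    moreover have "okw n (c @ [k])" using c(1) k by (simp add: okw_append okw_single)
    moreover have "length (c @ [k]) = ninv n (word_prod w)"
      using c(3) ninv_snoc[OF ok] k False by simp
    ultimately show ?thesis by blast
  qed
qed

definition Dw :: "nat list \<Rightarrow> (nat \<Rightarrow> mpoly) \<Rightarrow> nat \<Rightarrow> mpoly" where
  "Dw w v = foldr Dv w v"

lemma Dw_append: "Dw (a @ b) v = Dw a (Dw b v)"
  by (simp add: Dw_def)

lemma Dw_snoc: "Dw (a @ [s]) v = Dw a (Dv s v)"
  by (simp add: Dw_def)

definition red :: "nat \<Rightarrow> nat list \<Rightarrow> bool" where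
  "red n w \<longleftrightarrow> okw n w \<and> length w = ninv n (word_prod w)"

lemma desc_pos: "1 \<le> k \<Longrightarrow> k < n \<Longrightarrow> f (Suc k) < f k \<Longrightarrow> ninv n f > 0"
proof -
  assume "1 \<le> k" "k < n" "f (Suc k) < f k"
  then have "(k, Suc k) \<in> INV n f" by (simp add: INV_def)
  then show "ninv n f > 0" using finite_INV unfolding ninv_def by (auto simp: card_gt_0_iff)
qed

lemma red_snoc: assumes r: "red n (a @ [s])"
  shows "red n a" "word_prod a s < word_prod a (Suc s)" "1 \<le> s" "s < n"
proof -
  have ok: "okw n (a @ [s])" using r by (simp add: red_def)
  then have oka: "okw n a" and s: "1 \<le> s" "s < n" by (simp_all add: okw_append okw_single)
  have le: "ninv n (word_prod a) \<le> length a" by (rule ninv_le_length[OF oka])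
  have eq: "length a + 1 = ninv n (word_prod (a @ [s]))" using r by (simp add: red_def)
  have nd: "\<not> word_prod a (Suc s) < word_prod a s"
  proof
    assume "word_prod a (Suc s) < word_prod a s"
    then show False using ninv_snoc[OF ok] eq le by simp
  qed
  then have "ninv n (word_prod (a @ [s])) = Suc (ninv n (word_prod a))" using ninv_snoc[OF ok] by simp
  then show "red n a" using eq oka by (simp add: red_def)
  show "word_prod a s < word_prod a (Suc s)" using nd wp_neq[of a s] by simp
  show "1 \<le> s" "s < n" by (fact s)+
qed

lemma tr_tr_f [simp]: "f \<circ> tr k \<circ> tr k = f"
  by (rule ext) simp

lemma tits_adj:
  assumes IH: "\<And>a b v. length a < N \<Longrightarrow> red n a \<Longrightarrow> red n b \<Longrightarrow> word_prod a = word_prod b \<Longrightarrow> Dw a v = Dw b v"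
    and ra: "red n (a @ [s])" and rb: "red n (b @ [Suc s])"
    and eq: "word_prod (a @ [s]) = word_prod (b @ [Suc s])"
    and len: "length (a @ [s]) = N"
  shows "Dw (a @ [s]) v = Dw (b @ [Suc s]) v"
proof -
  let ?g = "word_prod a" and ?h = "word_prod b"
  let ?t = "Suc s"
  note A = red_snoc[OF ra] and B = red_snoc[OF rb]
  have gh: "?g \<circ> tr s = ?h \<circ> tr ?t" using eq by (simp add: wp_snoc)
  then have h: "?h = ?g \<circ> tr s \<circ> tr ?t" by (metis tr_tr_f)
  have w1: "?g s < ?g ?t" by (fact A(2))
  have w2: "?h ?t < ?h (Suc ?t)" by (fact B(2))
  then have w2': "?g (Suc ?t) < ?g s"
    unfolding h by (simp add: transpose_def)
  have w3: "?g (Suc ?t) < ?g ?t" using w1 w2' by simp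
  have oka: "okw n a" using A(1) by (simp add: red_def)
  have ok1: "okw n (a @ [?t])" using oka B(3,4) by (simp add: okw_append okw_single)
  have ok2: "okw n (a @ [?t, s])" using ok1 A(3,4) by (auto simp: okw_def)
  have n1: "ninv n (word_prod (a @ [?t])) = ninv n ?g - 1"
    using ninv_snoc[OF ok1] w3 by simp
  have g1: "word_prod (a @ [?t, s]) = word_prod (a @ [?t]) \<circ> tr s"
    using wp_snoc[of "a @ [?t]" s] by simp
  have d1: "word_prod (a @ [?t]) (Suc s) < word_prod (a @ [?t]) s"
    using w1 w2' by (simp add: wp_snoc transpose_def)
  have n2: "ninv n (word_prod (a @ [?t, s])) = ninv n (word_prod (a @ [?t])) - 1"
    using ninv_snoc[of n "a @ [?t]" s] ok2 d1 by simp
  have p1: "ninv n (word_prod (a @ [?t])) > 0" by (rule desc_pos[OF A(3) A(4) d1])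
  have p0: "ninv n ?g > 0" by (rule desc_pos[OF B(3) B(4)]) (use w3 in simp)
  obtain c where c: "okw n c" "word_prod c = word_prod (a @ [?t, s])"
      "length c = ninv n (word_prod (a @ [?t, s]))"
    using reduced_exists[OF ok2] by blast
  have lc: "length c + 2 = length a"
    using c(3) n1 n2 p0 p1 A(1) by (simp add: red_def)
  have e1: "word_prod (c @ [s, ?t]) = ?g"
  proof (rule ext)
    fix x
    show "word_prod (c @ [s, ?t]) x = ?g x"
      using c(2) by (simp add: wp_append wp_Cons)
  qed
  have r1: "red n (c @ [s, ?t])"
    using e1 c(1) A(1) A(3,4) B(3,4) lc
    by (simp add: red_def okw_append okw_def)
  have e2: "word_prod (c @ [?t, s]) = ?h"
  proof (rule ext)
    fix x
    show "word_prod (c @ [?t, s]) x = ?h x"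
      using c(2) unfolding h by (simp add: wp_append wp_Cons tr_braid)
  qed
  have lab: "length a = length b" using ra rb eq by (simp add: red_def)
  have r2: "red n (c @ [?t, s])"
    using e2 c(1) B(1) A(3,4) B(3,4) lc lab
    by (simp add: red_def okw_append okw_def)
  have la: "length a < N" using len by simp
  have lb: "length b < N" using len rb ra eq by (simp add: red_def)
  have "Dw (a @ [s]) v = Dw a (Dv s v)" by (rule Dw_snoc)
  also have "\<dots> = Dw (c @ [s, ?t]) (Dv s v)" by (rule IH[OF la A(1) r1 e1[symmetric]])
  also have "\<dots> = Dw c (Dv s (Dv ?t (Dv s v)))" by (simp add: Dw_def)
  also have "\<dots> = Dw c (Dv ?t (Dv s (Dv ?t v)))" by (simp add: Dv_braid)
  also have "\<dots> = Dw (c @ [?t, s]) (Dv ?t v)" by (simp add: Dw_def)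
  also have "\<dots> = Dw b (Dv ?t v)" by (rule IH[OF _ r2 B(1) e2]) (use lc la in simp)
  also have "\<dots> = Dw (b @ [?t]) v" by (simp add: Dw_snoc)
  finally show ?thesis .
qed


lemma tits_far:
  assumes IH: "\<And>a b v. length a < N \<Longrightarrow> red n a \<Longrightarrow> red n b \<Longrightarrow> word_prod a = word_prod b \<Longrightarrow> Dw a v = Dw b v"
    and ra: "red n (a @ [s])" and rb: "red n (b @ [t])"
    and eq: "word_prod (a @ [s]) = word_prod (b @ [t])"
    and len: "length (a @ [s]) = N"
    and far: "Suc s < t \<or> Suc t < s"
  shows "Dw (a @ [s]) v = Dw (b @ [t]) v"
proof -
  let ?g = "word_prod a" and ?h = "word_prod b"
  note A = red_snoc[OF ra] and B = red_snoc[OF rb]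
  have gh: "?g \<circ> tr s = ?h \<circ> tr t" using eq by (simp add: wp_snoc)
  then have h: "?h = ?g \<circ> tr s \<circ> tr t" by (metis tr_tr_f)
  have w2: "?h t < ?h (Suc t)" by (fact B(2))
  moreover have "Suc t \<noteq> s" "t \<noteq> s" "t \<noteq> Suc s" using far by auto
  ultimately have w3: "?g (Suc t) < ?g t"
    unfolding h by (simp add: transpose_def)
  have oka: "okw n a" using A(1) by (simp add: red_def)
  have ok1: "okw n (a @ [t])" using oka B(3,4) by (simp add: okw_append okw_single)
  have n1: "ninv n (word_prod (a @ [t])) = ninv n ?g - 1"
    using ninv_snoc[OF ok1] w3 by simp
  have p0: "ninv n ?g > 0" by (rule desc_pos[OF B(3) B(4) w3])
  obtain c where c: "okw n c" "word_prod c = word_prod (a @ [t])"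
      "length c = ninv n (word_prod (a @ [t]))"
    using reduced_exists[OF ok1] by blast
  have lc: "length c + 1 = length a"
    using c(3) n1 p0 A(1) by (simp add: red_def)
  have e1: "word_prod (c @ [t]) = ?g"
    using c(2) by (simp add: wp_snoc)
  have r1: "red n (c @ [t])"
    using e1 c(1) A(1) B(3,4) lc
    by (simp add: red_def okw_append okw_def)
  have e2: "word_prod (c @ [s]) = ?h"
  proof (rule ext)
    fix x
    show "word_prod (c @ [s]) x = ?h x"
      using c(2) tr_comm[OF far, of x] unfolding h by (simp add: wp_snoc)
  qed
  have lab: "length a = length b" using ra rb eq by (simp add: red_def)
  have r2: "red n (c @ [s])"
    using e2 c(1) B(1) A(3,4) lc lab
    by (simp add: red_def okw_append okw_def)
  have la: "length a < N" using len by simp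
  have "Dw (a @ [s]) v = Dw a (Dv s v)" by (rule Dw_snoc)
  also have "\<dots> = Dw (c @ [t]) (Dv s v)" by (rule IH[OF la A(1) r1 e1[symmetric]])
  also have "\<dots> = Dw c (Dv t (Dv s v))" by (simp add: Dw_def)
  also have "Dv t (Dv s v) = Dv s (Dv t v)" by (rule Dv_comm) (use far in auto)
  then have "Dw c (Dv t (Dv s v)) = Dw c (Dv s (Dv t v))" by simp
  also have "\<dots> = Dw (c @ [s]) (Dv t v)" by (simp add: Dw_def)
  also have "\<dots> = Dw b (Dv t v)" by (rule IH[OF _ r2 B(1) e2]) (use lc la in simp)
  also have "\<dots> = Dw (b @ [t]) v" by (simp add: Dw_snoc)
  finally show ?thesis .
qed

lemma tits: "red n a \<Longrightarrow> red n b \<Longrightarrow> word_prod a = word_prod b \<Longrightarrow> Dw a v = Dw b v"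
proof (induction "length a" arbitrary: a b v rule: less_induct)
  case less
  have lab: "length a = length b" using less.prems by (simp add: red_def)
  show ?case
  proof (cases a rule: rev_exhaust)
    case Nil
    then have "b = []" using lab by simp
    then show ?thesis using Nil by simp
  next
    case (snoc a' s)
    then obtain b' t where b: "b = b' @ [t]" using lab by (cases b rule: rev_exhaust) auto
    have IH: "\<And>x y v. length x < length a \<Longrightarrow> red n x \<Longrightarrow> red n y \<Longrightarrow> word_prod x = word_prod y \<Longrightarrow> Dw x v = Dw y v"
      using less.hyps by blast
    consider "s = t" | "Suc s < t \<or> Suc t < s" | "t = Suc s" | "s = Suc t" by linarith
    then show ?thesis
    proof cases
      case 1
      have e: "word_prod a' = word_prod b'"
        using less.prems(3) unfolding snoc b 1 wp_snoc by (metis tr_tr_f)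
      have r: "red n a'" "red n b'"
        using red_snoc(1) less.prems(1,2) snoc b by blast+
      have l: "length a' < length a" using snoc by simp
      have "Dw a' (Dv s v) = Dw b' (Dv s v)"
        by (rule IH[OF l r e])
      then show ?thesis using snoc b 1 by (simp add: Dw_snoc)
    next
      case 2
      show ?thesis unfolding snoc b
        by (rule tits_far[OF IH]) (use less.prems snoc b 2 in simp_all)
    next
      case 3
      show ?thesis unfolding snoc b 3
        by (rule tits_adj[OF IH]) (use less.prems snoc b 3 in simp_all)
    next
      case 4
      have "Dw (b' @ [t]) v = Dw (a' @ [Suc t]) v"
        by (rule tits_adj[where N = "length a", OF IH]) (use less.prems snoc b 4 lab in \<open>simp_all\<close>)
      then show ?thesis unfolding snoc b 4 by simp
    qed
  qed
qed

definition W :: "nat \<Rightarrow> nat \<Rightarrow> nat list" where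
  "W n m = concat (map (\<lambda>j. rev [j..<n]) [m..<n])"

lemma W_top: "n \<le> m \<Longrightarrow> W n m = []"
  by (simp add: W_def)

lemma W_step: "m < n \<Longrightarrow> W n m = rev [m..<n] @ W n (Suc m)"
  by (simp add: W_def upt_conv_Cons)

lemma set_W: "set (W n m) \<subseteq> {m..<n}"
  by (auto simp: W_def)

definition cyc :: "nat \<Rightarrow> nat \<Rightarrow> nat \<Rightarrow> nat" where
  "cyc m n j = (if j = m then n else if m < j \<and> j \<le> n then j - 1 else j)"

lemma wp_cyc: "m \<le> n \<Longrightarrow> word_prod (rev [m..<n]) = cyc m n"
proof (induction n)
  case 0 then show ?case by (simp add: cyc_def fun_eq_iff)
next
  case (Suc n)
  show ?case
  proof (cases "m = Suc n")
    case True then show ?thesis by (simp add: cyc_def fun_eq_iff)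
  next
    case False
    then have mn: "m \<le> n" using Suc.prems by simp
    have "word_prod (rev [m..<Suc n]) = tr n \<circ> cyc m n"
      using Suc.IH[OF mn] mn by (simp add: wp_Cons)
    also have "\<dots> = cyc m (Suc n)"
      using mn by (auto simp: fun_eq_iff cyc_def transpose_def)
    finally show ?thesis .
  qed
qed

definition blk :: "nat \<Rightarrow> nat \<Rightarrow> nat \<Rightarrow> nat" where
  "blk m n j = (if m \<le> j \<and> j \<le> n then m + n - j else j)"

lemma wp_W: "m \<le> n \<Longrightarrow> word_prod (W n m) = blk m n"
proof (induction "n - m" arbitrary: m)
  case 0
  then have "m = n" by simp
  then show ?case by (auto simp: W_top blk_def fun_eq_iff)
next
  case (Suc d)
  then have mn: "m < n" by simp
  have IH: "word_prod (W n (Suc m)) = blk (Suc m) n" using Suc mn by simp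
  have "word_prod (W n m) = cyc m n \<circ> blk (Suc m) n"
    using mn IH by (simp add: W_step wp_append wp_cyc)
  also have "\<dots> = blk m n"
    using mn by (auto simp: fun_eq_iff cyc_def blk_def)
  finally show ?case .
qed

lemma longest_blk: "longest n = blk 1 n"
  by (auto simp: fun_eq_iff longest_def blk_def)

lemma okw_W: "1 \<le> m \<Longrightarrow> okw n (W n m)"
  using set_W[of n m] by (auto simp: okw_def)

definition PR :: "nat \<Rightarrow> nat \<Rightarrow> (nat \<times> nat) set" where
  "PR m n = {(p, q). m \<le> p \<and> p < q \<and> q \<le> n}"

lemma length_W: "m \<le> n \<Longrightarrow> length (W n m) = card (PR m n)"
proof (induction "n - m" arbitrary: m)
  case 0
  then have "m = n" by simp
  moreover have "PR n n = {}" by (auto simp: PR_def)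
  ultimately show ?case by (simp add: W_top)
next
  case (Suc d)
  then have mn: "m < n" by simp
  have IH: "length (W n (Suc m)) = card (PR (Suc m) n)" using Suc mn by simp
  have split: "PR m n = (\<lambda>q. (m, q)) ` {m<..n} \<union> PR (Suc m) n"
    by (auto simp: PR_def)
  have fin: "finite (PR (Suc m) n)"
    by (rule finite_subset[of _ "{0..n} \<times> {0..n}"]) (auto simp: PR_def)
  have "card (PR m n) = card ((\<lambda>q. (m, q)) ` {m<..n}) + card (PR (Suc m) n)"
    unfolding split by (rule card_Un_disjoint) (simp, rule fin, auto simp: PR_def)
  also have "card ((\<lambda>q. (m, q)) ` {m<..n}) = n - m"
    by (subst card_image) (auto simp: inj_on_def)
  finally show ?case using mn IH by (simp add: W_step)
qed

lemma ninv_longest: "ninv n (longest n) = card (PR 1 n)"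
proof -
  have "INV n (longest n) = PR 1 n"
    by (auto simp: INV_def PR_def longest_def)
  then show ?thesis by (simp add: ninv_def)
qed

lemma red_W: "1 \<le> n \<Longrightarrow> red n (W n 1)"
  using okw_W[of 1 n] wp_W[of 1 n] length_W[of 1 n] ninv_longest[of n]
  by (simp add: red_def longest_blk)

lemma red_of_reduced: assumes "1 \<le> n" and r: "reduced_word n (longest n) w" shows "red n w"
proof -
  have ok: "okw n w" and p: "word_prod w = longest n" using r by (simp_all add: reduced_word_def okw_def)
  obtain c where c: "okw n c" "word_prod c = word_prod w" "length c = ninv n (word_prod w)"
    using reduced_exists[OF ok] by blast
  have mn: "\<forall>w'. set w' \<subseteq> {1..<n} \<and> word_prod w' = longest n \<longrightarrow> length w \<le> length w'"
    using r unfolding reduced_word_def by (elim conjE)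
  have "set c \<subseteq> {1..<n} \<and> word_prod c = longest n" using c(1,2) p unfolding okw_def by simp
  then have "length w \<le> length c" using mn by blast
  moreover have "ninv n (word_prod w) \<le> length w" by (rule ninv_le_length[OF ok])
  ultimately show ?thesis using ok c by (simp add: red_def)
qed

lemma reduced_ex: assumes "1 \<le> n" shows "\<exists>w. reduced_word n (longest n) w"
proof -
  let ?P = "\<lambda>w. set w \<subseteq> {1..<n} \<and> word_prod w = longest n"
  have "?P (W n 1)" using okw_W[of 1 n] wp_W[of 1 n] assms by (simp add: okw_def longest_blk)
  then obtain w where "?P w" "\<forall>y. ?P y \<longrightarrow> length w \<le> length y"
    using ex_has_least_nat[of ?P "W n 1" length] by blast
  then show ?thesis unfolding reduced_word_def by blast
qed

lemma Dw_reduced: assumes "1 \<le> n"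
  shows "Dw (SOME w. reduced_word n (longest n) w) v = Dw (W n 1) v"
proof -
  have "reduced_word n (longest n) (SOME w. reduced_word n (longest n) w)"
    using reduced_ex[OF assms] by (rule someI_ex)
  then have r: "red n (SOME w. reduced_word n (longest n) w)"
    and p: "word_prod (SOME w. reduced_word n (longest n) w) = longest n"
    using red_of_reduced[OF assms] by (auto simp: reduced_word_def)
  have e: "word_prod (SOME w. reduced_word n (longest n) w) = word_prod (W n 1)"
    using p wp_W[of 1 n] assms longest_blk[of n] by metis
  show ?thesis by (rule tits[OF r red_W[OF assms] e])
qed

definition ev :: "mpoly \<Rightarrow> nat \<Rightarrow> nat \<Rightarrow> mpoly" where
  "ev p i = (\<lambda>l. if l = i then p else 0)"

definition Rv :: "nat \<Rightarrow> nat \<Rightarrow> nat \<Rightarrow> mpoly" where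
  "Rv n i = (\<lambda>l. if i \<le> l \<and> l \<le> n then (-1) ^ (l + i) * complete_h (l - i) {l..n} else 0)"

definition stair :: "nat \<Rightarrow> nat \<Rightarrow> mpoly" where
  "stair m n = (\<Prod>k = m..n. var k ^ (n - k))"

lemma Dw_Nil [simp]: "Dw [] v = v"
  by (simp add: Dw_def)

lemma Dw_Cons: "Dw (k # ks) v = Dv k (Dw ks v)"
  by (simp add: Dw_def)

lemma Dw_smul_sym: "(\<forall>k\<in>set ks. sg k p = p) \<Longrightarrow> Dw ks (smul p v) = smul p (Dw ks v)"
  by (induction ks) (simp_all add: Dw_Cons Dv_smul_sym)

lemma Dw_smul_inv: "(\<forall>k\<in>set ks. Dv k u = (\<lambda>_. 0)) \<Longrightarrow> Dw ks (smul p u) = smul (foldr Dl ks p) u"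
  by (induction ks) (simp_all add: Dw_Cons Dv_smul_inv)

lemma Dl_one [simp]: "Dl k 1 = 0"
  by (rule Dl_sym) simp

lemma Dv_ev1: "k \<noteq> j \<Longrightarrow> Dv k (ev 1 j) = (\<lambda>_. 0)"
  by (auto simp: fun_eq_iff Dv_def ev_def)

lemma Dl_h_sym: "(k \<in> A \<longleftrightarrow> Suc k \<in> A) \<Longrightarrow> Dl k (complete_h e A) = 0"
  by (rule Dl_sym) (rule h_sg_same)

lemma Dl_h_up: assumes "Suc k \<le> n"
  shows "Dl k (complete_h (Suc e) {Suc k..n}) = - complete_h e {k..n}"
proof -
  let ?S = "{Suc (Suc k)..n}"
  have S: "finite ?S" "k \<notin> ?S" "Suc k \<notin> ?S" by auto
  have 1: "{Suc k..n} = tr k ` insert k ?S"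
  proof -
    have "tr k ` ?S = ?S" by (rule transpose_image_eq) simp
    then show ?thesis using assms by (auto simp: Icc_eq_insert_lb_nat)
  qed
  have 2: "insert k (insert (Suc k) ?S) = {k..n}" using assms by auto
  have "Dl k (complete_h (Suc e) {Suc k..n}) = Dl k (sg k (complete_h (Suc e) (insert k ?S)))"
    unfolding 1 h_sg ..
  also have "\<dots> = - complete_h e {k..n}"
    unfolding Dl_sg Dl_h[OF S] 2 ..
  finally show ?thesis .
qed

lemma Dv_Rv: assumes k: "k < n" shows "Dv k (Rv n i) = (\<lambda>_. 0)"
proof (rule ext)
  fix l
  show "Dv k (Rv n i) l = 0"
  proof (cases "l = Suc k")
    case False
    have "Dl k (Rv n i l) = 0"
      using False k by (auto simp: Rv_def Dl_sgn intro!: Dl_h_sym)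
    then show ?thesis using False by (simp add: Dv_def)
  next
    case True
    consider "i \<le> k" | "i = Suc k" | "Suc k < i" by linarith
    then show ?thesis
    proof cases
      case 1
      have a: "Rv n i (Suc k) = (-1) ^ (Suc k + i) * complete_h (Suc (k - i)) {Suc k..n}"
        using 1 k by (simp add: Rv_def Suc_diff_le)
      have b: "Rv n i k = (-1) ^ (k + i) * complete_h (k - i) {k..n}"
        using 1 k by (simp add: Rv_def)
      have c: "sg k (complete_h (k - i) {k..n}) = complete_h (k - i) {k..n}"
        using k by (intro h_sg_same) auto
      show ?thesis using True k
        by (simp add: Dv_def a b c Dl_sgn Dl_h_up sg_neg1_pow Dl_minus)
    next
      case 2
      then show ?thesis using True k by (simp add: Dv_def Rv_def h_zero Dl_sgn)
    next
      case 3
      then show ?thesis using True by (simp add: Dv_def Rv_def)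
    qed
  qed
qed

lemma fold_Dl_pow: "m \<le> k \<Longrightarrow> k - m \<le> d \<Longrightarrow> foldr Dl (rev [m..<k]) (var m ^ d) = complete_h (d - (k - m)) {m..k}"
proof (induction k)
  case 0 then show ?case by (simp add: h_single)
next
  case (Suc k)
  show ?case
  proof (cases "m = Suc k")
    case True then show ?thesis by (simp add: h_single)
  next
    case False
    then have mk: "m \<le> k" using Suc.prems by simp
    have IH: "foldr Dl (rev [m..<k]) (var m ^ d) = complete_h (Suc (d - (Suc k - m))) (insert k {m..<k})"
    proof -
      have "d - (k - m) = Suc (d - (Suc k - m))" using Suc.prems mk by simp
      moreover have "{m..k} = insert k {m..<k}" using mk by auto
      ultimately show ?thesis using Suc.IH mk Suc.prems by simp
    qed
    have "insert k (insert (Suc k) {m..<k}) = {m..Suc k}" using mk by auto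
    then show ?thesis using mk by (simp add: IH Dl_h)
  qed
qed

lemma pattern: "m \<le> k \<Longrightarrow> k - m \<le> d \<Longrightarrow> Dw (rev [m..<k]) (ev (var m ^ d) m) =
   (\<lambda>l. if m \<le> l \<and> l \<le> k then (-1) ^ (l - m) * complete_h (d - (k - l)) {l..k} else 0)"
proof (induction k)
  case 0 then show ?case by (auto simp: fun_eq_iff ev_def h_single)
next
  case (Suc k)
  show ?case
  proof (cases "m = Suc k")
    case True then show ?thesis by (auto simp: fun_eq_iff ev_def h_single)
  next
    case False
    then have mk: "m \<le> k" using Suc.prems by simp
    have IH: "Dw (rev [m..<k]) (ev (var m ^ d) m) =
      (\<lambda>l. if m \<le> l \<and> l \<le> k then (-1) ^ (l - m) * complete_h (d - (k - l)) {l..k} else 0)"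
      using Suc.IH mk Suc.prems by simp
    show ?thesis
    proof (rule ext)
      fix l
      have "Dw (rev [m..<Suc k]) (ev (var m ^ d) m) l = Dv k (Dw (rev [m..<k]) (ev (var m ^ d) m)) l"
        using mk by (simp add: Dw_Cons)
      also have "\<dots> = (if m \<le> l \<and> l \<le> Suc k then (-1) ^ (l - m) * complete_h (d - (Suc k - l)) {l..Suc k} else 0)"
      proof -
        consider "m \<le> l \<and> l \<le> k" | "l = Suc k" | "\<not> (m \<le> l \<and> l \<le> Suc k)" by linarith
        then show ?thesis
        proof cases
          case 1
          have e: "d - (k - l) = Suc (d - (Suc k - l))" using 1 Suc.prems by arith
          have s1: "{l..k} = insert k {l..<k}" using 1 by auto
          have s2: "insert k (insert (Suc k) {l..<k}) = {l..Suc k}" using 1 by auto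
          have "Dl k (complete_h (d - (k - l)) {l..k}) = complete_h (d - (Suc k - l)) {l..Suc k}"
            unfolding e s1 by (subst Dl_h) (auto simp: s2)
          then show ?thesis using 1 by (simp add: IH Dv_def Dl_sgn)
        next
          case 2
          have "(-1) ^ (Suc k - m) = - ((-1) ^ (k - m) :: mpoly)" using mk by (simp add: Suc_diff_le)
          then show ?thesis using 2 mk by (simp add: IH Dv_def h_single sg_neg1_pow sg_pow sg_var)
        next
          case 3
          then have "\<not> (m \<le> l \<and> l \<le> k)" "l \<noteq> Suc k" using mk by auto
          then show ?thesis using 3 by (auto simp: IH Dv_def)
        qed
      qed
      finally show "Dw (rev [m..<Suc k]) (ev (var m ^ d) m) l =
        (if m \<le> l \<and> l \<le> Suc k then (-1) ^ (l - m) * complete_h (d - (Suc k - l)) {l..Suc k} else 0)" .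
    qed
  qed
qed

lemma ev_mult: "ev (p * q) i = smul p (ev q i)"
  by (auto simp: fun_eq_iff ev_def smul_def)

lemma smul_one [simp]: "smul 1 v = v"
  by (simp add: smul_def)

lemma stair_step: "m < n \<Longrightarrow> stair m n = var m ^ (n - m) * stair (Suc m) n"
  unfolding stair_def by (simp add: Icc_eq_insert_lb_nat[of m n])

lemma stair_top: "stair n n = 1"
  by (simp add: stair_def)

lemma main_ind: "1 \<le> m \<Longrightarrow> m \<le> n \<Longrightarrow> 1 \<le> i \<Longrightarrow> i \<le> n \<Longrightarrow>
    Dw (W n m) (ev (stair m n) i) = (if i < m then ev 1 i else Rv n i)"
proof (induction "n - m" arbitrary: m)
  case 0
  then have mn: "m = n" by simp
  show ?case
  proof (cases "i < m")
    case True then show ?thesis using mn by (simp add: W_top stair_top)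
  next
    case False
    then have "i = n" using 0 mn by simp
    moreover have "Rv n n = ev 1 n"
      by (auto simp: fun_eq_iff Rv_def ev_def h_zero)
    ultimately show ?thesis using mn by (simp add: W_top stair_top)
  qed
next
  case (Suc d)
  then have mn: "m < n" by simp
  let ?x = "var m ^ (n - m)"
  have IH: "Dw (W n (Suc m)) (ev (stair (Suc m) n) i) = (if i < Suc m then ev 1 i else Rv n i)"
    using Suc mn by simp
  have sym: "\<forall>k\<in>set (W n (Suc m)). sg k ?x = ?x"
  proof
    fix k assume "k \<in> set (W n (Suc m))"
    then have "Suc m \<le> k" using set_W[of n "Suc m"] by auto
    then show "sg k ?x = ?x" by (simp add: sg_pow sg_var)
  qed
  have "Dw (W n m) (ev (stair m n) i) = Dw (rev [m..<n]) (Dw (W n (Suc m)) (smul ?x (ev (stair (Suc m) n) i)))"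
    using mn by (simp add: W_step Dw_append stair_step ev_mult)
  also have "\<dots> = Dw (rev [m..<n]) (smul ?x (if i < Suc m then ev 1 i else Rv n i))"
    by (simp only: Dw_smul_sym[OF sym] IH)
  also have "\<dots> = (if i < m then ev 1 i else Rv n i)"
  proof -
    have fl: "foldr Dl (rev [m..<n]) ?x = 1"
      using fold_Dl_pow[of m n "n - m"] mn by (simp add: h_zero)
    consider "i < m" | "i = m" | "m < i" by linarith
    then show ?thesis
    proof cases
      case 1
      have "\<forall>k\<in>set (rev [m..<n]). Dv k (ev 1 i) = (\<lambda>_. 0)"
        using 1 by (auto intro: Dv_ev1)
      then show ?thesis using 1 by (simp add: Dw_smul_inv fl)
    next
      case 3
      have "\<forall>k\<in>set (rev [m..<n]). Dv k (Rv n i) = (\<lambda>_. 0)"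
        by (auto intro: Dv_Rv)
      then show ?thesis using 3 by (simp add: Dw_smul_inv fl)
    next
      case 2
      have "smul ?x (ev 1 m) = ev ?x m" by (auto simp: fun_eq_iff smul_def ev_def)
      then have "Dw (rev [m..<n]) (smul ?x (if i < Suc m then ev 1 i else Rv n i)) =
          (\<lambda>l. if m \<le> l \<and> l \<le> n then (-1) ^ (l - m) * complete_h (n - m - (n - l)) {l..n} else 0)"
        using 2 pattern[of m n "n - m"] mn by simp
      also have "\<dots> = Rv n i"
      proof (rule ext)
        fix l
        show "(if m \<le> l \<and> l \<le> n then (-1) ^ (l - m) * complete_h (n - m - (n - l)) {l..n} else 0) = Rv n i l"
        proof (cases "m \<le> l \<and> l \<le> n")
          case True
          have e1: "l + m = (l - m) + 2 * m" using True by simp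
          have "(-1::mpoly) ^ (l + m) = (-1) ^ (l - m) * ((-1) ^ 2) ^ m"
            by (subst e1, simp only: power_add power_mult)
          then have "(-1::mpoly) ^ (l + m) = (-1) ^ (l - m)" "n - m - (n - l) = l - m"
            using True by simp_all
          then show ?thesis using True 2 by (simp add: Rv_def)
        next
          case False then show ?thesis using 2 by (auto simp: Rv_def)
        qed
      qed
      finally show ?thesis using 2 by simp
    qed
  qed
  finally show ?case .
qed

lemma omega_times_mkR: "omega_times p i = mkR (ev p i)"
proof (rule ext)
  fix T
  show "omega_times p i T = mkR (ev p i) T"
  proof (cases "card T = 1")
    case True
    then obtain l where "T = {l}" by (rule card_1_singletonE)
    then show ?thesis by (simp add: omega_times_def ev_def)
  next
    case False
    then have "T \<noteq> {i}" by auto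
    then show ?thesis using False by (simp add: omega_times_def mkR_def)
  qed
qed

lemma rhs_mkR: "(\<lambda>T. \<Sum>l = i..n. omega_times ((-1) ^ (l + i) * complete_h (l - i) {l..n}) l T) = mkR (Rv n i)"
proof (rule ext)
  fix T
  show "(\<Sum>l = i..n. omega_times ((-1) ^ (l + i) * complete_h (l - i) {l..n}) l T) = mkR (Rv n i) T"
  proof (cases "card T = 1")
    case True
    then obtain l0 where T: "T = {l0}" by (rule card_1_singletonE)
    have "(\<Sum>l = i..n. omega_times ((-1) ^ (l + i) * complete_h (l - i) {l..n}) l T) =
        (\<Sum>l = i..n. if l = l0 then (-1) ^ (l + i) * complete_h (l - i) {l..n} else 0)"
      unfolding T by (rule sum.cong) (auto simp: omega_times_def)
    also have "\<dots> = Rv n i l0"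
      by (simp add: Rv_def)
    finally show ?thesis using T by simp
  next
    case False
    then have "\<forall>l. T \<noteq> {l}" by auto
    then show ?thesis using False by (simp add: omega_times_def mkR_def)
  qed
qed

lemma foldr_demazure: "foldr demazure w (mkR v) = mkR (Dw w v)"
  by (induction w) (simp_all add: Dw_Cons demazure_mkR)

theorem lemma2p2:
  fixes n i :: nat
  assumes "1 \<le> i" and "i \<le> n"
  shows "demazure_perm n (longest n) (omega_times (staircase n) i) =
         (\<lambda>T. \<Sum>l = i..n. omega_times ((-1) ^ (l + i) * complete_h (l - i) {l..n}) l T)"
proof -
  have n: "1 \<le> n" using assms by simp
  have st: "staircase n = stair 1 n" by (simp add: staircase_def stair_def)
  have "demazure_perm n (longest n) (omega_times (staircase n) i) =
      mkR (Dw (SOME w. reduced_word n (longest n) w) (ev (stair 1 n) i))"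
    by (simp add: demazure_perm_def omega_times_mkR foldr_demazure st)
  also have "\<dots> = mkR (Dw (W n 1) (ev (stair 1 n) i))"
    by (simp add: Dw_reduced[OF n])
  also have "\<dots> = mkR (Rv n i)"
    using main_ind[of 1 n i] assms by simp
  finally show ?thesis by (simp add: rhs_mkR)
qed

end
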